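(* Let $f$ satisfy Assumption (M) with exponent $p>1+\frac2N$. Then there is a constant $C^-=C^-(f,N)>0$ such that for every $\varepsilon\in(0,1]$ and every $L>0$ with $L<C^-\varepsilon^{-\frac{p-1}{2}}$, the solution $u$ of $u_t=\Delta u+f(u)$ on $(0,\infty)\times\mathbb R^N$ with $u(0,x)=\varepsilon\mathbf 1_{B_L}(x)$ satisfies $\|u(t,\cdot)\|_{L^\infty(\mathbb R^N)}=\mathcal O(t^{-N/2})$ as $t\to+\infty$.
   Context: Assumption (M): $f:\mathbb R\to\mathbb R$ is locally Lipschitz continuous, $f=0$ on $(-\infty,0]\cup[1,\infty)$, $f(u)>0$ for all $u\in(0,1)$, and for some $p>1$, $0<\liminf_{u\to0^+}f(u)/u^p\le\limsup_{u\to0^+}f(u)/u^p<+\infty$. $B_L$ is the open ball of radius $L$ centred at $0$ in $\mathbb R^N$. *)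

theory Defs
  imports "HOL-Analysis.Analysis" "HOL-Library.Liminf_Limsup"
begin

definition assumption_M :: "(real \<Rightarrow> real) \<Rightarrow> real \<Rightarrow> bool" where
  "assumption_M f p \<longleftrightarrow>
     (\<forall>x. \<exists>U. open U \<and> x \<in> U \<and> (\<exists>K. K-lipschitz_on U f)) \<and>
     (\<forall>u. u \<le> 0 \<longrightarrow> f u = 0) \<and> (\<forall>u. u \<ge> 1 \<longrightarrow> f u = 0) \<and>
     (\<forall>u. 0 < u \<and> u < 1 \<longrightarrow> f u > 0) \<and>
     p > 1 \<and>
     0 < Liminf (at_right 0) (\<lambda>u. ereal (f u / u powr p)) \<and>
     Limsup (at_right 0) (\<lambda>u. ereal (f u / u powr p)) < \<infinity>"

definition heat_kernel :: "real \<Rightarrow> 'a::euclidean_space \<Rightarrow> real" where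
  "heat_kernel t z = (4 * pi * t) powr (- real DIM('a) / 2) * exp (- (norm z)\<^sup>2 / (4 * t))"

text \<open>(Mild) solution of u_t = Laplacian u + f(u) on (0,oo) x R^N with initial datum u0:
  measurable, bounded on (0,T] x R^N for every T, and satisfying Duhamel's formula.\<close>
definition mild_solution ::
  "(real \<Rightarrow> real) \<Rightarrow> ('a::euclidean_space \<Rightarrow> real) \<Rightarrow> (real \<Rightarrow> 'a \<Rightarrow> real) \<Rightarrow> bool" where
  "mild_solution f u0 u \<longleftrightarrow>
     case_prod u \<in> borel_measurable borel \<and>
     (\<forall>T>0. \<exists>M. \<forall>t\<in>{0<..T}. \<forall>x. \<bar>u t x\<bar> \<le> M) \<and>
     (\<forall>t>0. \<forall>x. u t x =
        (LINT y|lborel. heat_kernel t (x - y) * u0 y) +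
        (LINT s:{0<..<t}|lborel. (LINT y|lborel. heat_kernel (t - s) (x - y) * f (u s y))))"

end

theory Submission
  imports Defs "HOL-Probability.Probability"
begin


lemma hk_prod:
  fixes z :: "'a::euclidean_space"
  assumes t: "t > 0"
  shows "heat_kernel t z = (\<Prod>b\<in>Basis. normal_density 0 (sqrt (2*t)) (z \<bullet> b))"
proof -
  have nd: "normal_density 0 (sqrt (2*t)) v = (4*pi*t) powr (-1/2) * exp (- v\<^sup>2 / (4*t))" for v
  proof -
    have "sqrt (2 * pi * (sqrt (2*t))\<^sup>2) = sqrt (4*pi*t)" using t by simp
    also have "1 / \<dots> = (4*pi*t) powr (-1/2)" using t
      by (simp add: powr_minus_divide sqrt_def powr_half_sqrt)
    finally show ?thesis using t unfolding normal_density_def by simp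
  qed
  have "(\<Prod>b\<in>Basis. normal_density 0 (sqrt (2*t)) (z \<bullet> b))
      = (\<Prod>b\<in>(Basis::'a set). (4*pi*t) powr (-1/2)) * (\<Prod>b\<in>Basis. exp (- (z\<bullet>b)\<^sup>2 / (4*t)))"
    by (simp add: nd prod.distrib)
  also have "(\<Prod>b\<in>(Basis::'a set). (4*pi*t) powr (-1/2)) = (4*pi*t) powr (- real DIM('a) / 2)"
    using t by (simp add: powr_realpow[symmetric] powr_powr)
  also have "(\<Prod>b\<in>(Basis::'a set). exp (- (z\<bullet>b)\<^sup>2 / (4*t))) = exp (\<Sum>b\<in>Basis. - (z\<bullet>b)\<^sup>2 / (4*t))"
    by (simp add: exp_sum)
  also have "(\<Sum>b\<in>(Basis::'a set). - (z\<bullet>b)\<^sup>2 / (4*t)) = - (norm z)\<^sup>2 / (4*t)"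
  proof -
    have "(norm z)\<^sup>2 = (\<Sum>b\<in>(Basis::'a set). (z\<bullet>b)\<^sup>2)"
      unfolding power2_norm_eq_inner by (subst euclidean_inner) (simp add: power2_eq_square)
    then show ?thesis by (simp add: sum_divide_distrib[symmetric] sum_negf)
  qed
  finally show ?thesis unfolding heat_kernel_def by simp
qed

lemma hk_nonneg: "0 \<le> heat_kernel t z"
  unfolding heat_kernel_def by simp

lemma hk_conv_nn:
  fixes x :: "'a::euclidean_space"
  assumes a: "a > 0" and b: "b > 0"
  shows "(\<integral>\<^sup>+y. ennreal (heat_kernel a (x - y) * heat_kernel b y) \<partial>lborel) = ennreal (heat_kernel (a+b) x)"
proof -
  define h where "h c v = normal_density 0 (sqrt (2*a)) (x \<bullet> c - v) * normal_density 0 (sqrt (2*b)) v" for c v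
  have eq: "heat_kernel a (x - y) * heat_kernel b y = (\<Prod>c\<in>Basis. h c (y \<bullet> c))" for y
    using a b by (simp add: hk_prod h_def prod.distrib inner_diff_left)
  have "(\<integral>\<^sup>+y. ennreal (heat_kernel a (x - y) * heat_kernel b y) \<partial>lborel)
     = (\<integral>\<^sup>+y. ennreal (\<Prod>c\<in>(Basis::'a set). h c (y \<bullet> c)) \<partial>lborel)"
    by (simp add: eq)
  also have "\<dots> = (\<Prod>c\<in>(Basis::'a set). (\<integral>\<^sup>+v. h c v \<partial>lborel))"
    by (subst prod_ennreal[symmetric]) (auto simp: h_def intro!: nn_integral_lborel_prod)
  also have "\<dots> = (\<Prod>c\<in>(Basis::'a set). ennreal (normal_density 0 (sqrt (2*(a+b))) (x \<bullet> c)))"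
  proof (rule prod.cong[OF refl])
    fix c :: 'a
    have "(\<integral>\<^sup>+v. h c v \<partial>lborel) = normal_density 0 (sqrt ((sqrt (2*a))\<^sup>2 + (sqrt (2*b))\<^sup>2)) (x \<bullet> c)"
      unfolding h_def using fun_cong[OF conv_normal_density_zero_mean[of "sqrt (2*a)" "sqrt (2*b)"], of "x \<bullet> c"] a b
      by simp
    also have "(sqrt (2*a))\<^sup>2 + (sqrt (2*b))\<^sup>2 = 2*(a+b)" using a b by simp
    finally show "(\<integral>\<^sup>+v. h c v \<partial>lborel) = ennreal (normal_density 0 (sqrt (2*(a+b))) (x \<bullet> c))" .
  qed
  also have "\<dots> = ennreal (heat_kernel (a+b) x)"
    using a b by (simp add: hk_prod prod_ennreal)
  finally show ?thesis .
qed

lemma hk_total_nn: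
  fixes x :: "'a::euclidean_space"
  assumes a: "a > 0"
  shows "(\<integral>\<^sup>+y. ennreal (heat_kernel a (x - y)) \<partial>lborel) = 1"
proof -
  define h where "h c v = normal_density (x \<bullet> c) (sqrt (2*a)) v" for c v
  have eq: "heat_kernel a (x - y) = (\<Prod>c\<in>Basis. h c (y \<bullet> c))" for y
    using a by (simp add: hk_prod h_def inner_diff_left normal_density_def power2_commute)
  have "(\<integral>\<^sup>+y. ennreal (heat_kernel a (x - y)) \<partial>lborel)
     = (\<integral>\<^sup>+y. ennreal (\<Prod>c\<in>(Basis::'a set). h c (y \<bullet> c)) \<partial>lborel)"
    by (simp add: eq)
  also have "\<dots> = (\<Prod>c\<in>(Basis::'a set). (\<integral>\<^sup>+v. h c v \<partial>lborel))"
    by (subst prod_ennreal[symmetric]) (auto simp: h_def intro!: nn_integral_lborel_prod)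
  also have "\<dots> = (\<Prod>c\<in>(Basis::'a set). 1)"
  proof (rule prod.cong[OF refl])
    fix c :: 'a
    show "(\<integral>\<^sup>+v. h c v \<partial>lborel) = 1"
      unfolding h_def using a by (subst nn_integral_eq_integral) auto
  qed
  finally show ?thesis by simp
qed

lemma hk_meas[measurable]: "(\<lambda>z. heat_kernel t (z::'a::euclidean_space)) \<in> borel_measurable borel"
  unfolding heat_kernel_def by measurable

lemma hk_meas2[measurable]: "(\<lambda>y. heat_kernel t (x - y::'a::euclidean_space)) \<in> borel_measurable borel"
  unfolding heat_kernel_def by measurable

lemma hk_conv:
  fixes x :: "'a::euclidean_space"
  assumes a: "a > 0" and b: "b > 0"
  shows "has_bochner_integral lborel (\<lambda>y. heat_kernel a (x - y) * heat_kernel b y) (heat_kernel (a+b) x)"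
  by (rule has_bochner_integral_nn_integral) (auto simp: hk_nonneg hk_conv_nn[OF a b])

lemma hk_total:
  fixes x :: "'a::euclidean_space"
  assumes a: "a > 0"
  shows "has_bochner_integral lborel (\<lambda>y. heat_kernel a (x - y)) 1"
  by (rule has_bochner_integral_nn_integral) (auto simp: hk_nonneg hk_total_nn[OF a])

lemma hk_le:
  fixes x :: "'a::euclidean_space"
  assumes "t > 0"
  shows "heat_kernel t x \<le> (4*pi*t) powr (- real DIM('a) / 2)"
  unfolding heat_kernel_def using assms by (intro mult_left_le) auto

lemma hk_mono:
  fixes x :: "'a::euclidean_space"
  assumes s: "0 < \<sigma>" "\<sigma> \<le> \<rho>" "\<rho> \<le> q * \<sigma>" and q: "q > 0"
  shows "heat_kernel \<sigma> x \<le> q powr (real DIM('a) / 2) * heat_kernel \<rho> x"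
proof -
  have r: "\<rho> > 0" using s by linarith
  have "(4*pi*\<sigma>) powr (- real DIM('a) / 2) \<le> (4*pi*\<rho>/q) powr (- real DIM('a) / 2)"
    apply (rule powr_mono2')
    using s q r by (auto simp: field_simps)
  also have "\<dots> = q powr (real DIM('a) / 2) * (4*pi*\<rho>) powr (- real DIM('a) / 2)"
    using q r by (simp add: powr_divide powr_minus_divide divide_simps)
  finally have 1: "(4*pi*\<sigma>) powr (- real DIM('a) / 2) \<le> q powr (real DIM('a) / 2) * (4*pi*\<rho>) powr (- real DIM('a) / 2)" .
  have 2: "exp (- (norm x)\<^sup>2 / (4 * \<sigma>)) \<le> exp (- (norm x)\<^sup>2 / (4 * \<rho>))"
    using s r by (auto intro!: divide_left_mono mult_pos_pos)
  have "heat_kernel \<sigma> x \<le> (q powr (real DIM('a) / 2) * (4*pi*\<rho>) powr (- real DIM('a) / 2)) * exp (- (norm x)\<^sup>2 / (4 * \<rho>))"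
    unfolding heat_kernel_def by (rule mult_mono[OF 1 2]) auto
  then show ?thesis unfolding heat_kernel_def by (simp add: mult.assoc)
qed

lemma hk_pow:
  fixes y :: "'a::euclidean_space"
  assumes r: "r > 0" and q: "q > 0"
  shows "heat_kernel r y powr q = (4*pi*r) powr (- real DIM('a) * (q - 1) / 2) * q powr (- real DIM('a) / 2) * heat_kernel (r/q) y"
proof -
  let ?N = "real DIM('a)"
  have "heat_kernel r y powr q = ((4*pi*r) powr (- ?N / 2)) powr q * exp (- (norm y)\<^sup>2 / (4 * r)) powr q"
    unfolding heat_kernel_def by (simp add: powr_mult)
  also have "\<dots> = (4*pi*r) powr (- ?N * q / 2) * exp (- q * (norm y)\<^sup>2 / (4 * r))"
    by (simp add: powr_powr powr_def)
  also have "\<dots> = (4*pi*r) powr (- ?N * (q - 1) / 2) * q powr (- ?N / 2) * ((4*pi*(r/q)) powr (- ?N / 2) * exp (- (norm y)\<^sup>2 / (4 * (r/q))))"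
  proof -
    have "(4*pi*(r/q)) powr (- ?N / 2) = (4*pi*r) powr (- ?N / 2) * q powr (?N / 2)"
      using r q by (simp add: powr_divide powr_minus_divide divide_simps)
    moreover have "(4*pi*r) powr (- ?N * q / 2) = (4*pi*r) powr (- ?N * (q - 1) / 2) * (4*pi*r) powr (- ?N / 2)"
    proof -
      have "- ?N * q / 2 = - ?N * (q - 1) / 2 + - ?N / 2" by (simp add: field_simps)
      then show ?thesis by (simp only: powr_add)
    qed
    moreover have "q powr (- ?N / 2) * q powr (?N / 2) = 1"
      using q by (simp add: powr_add[symmetric])
    moreover have "- q * (norm y)\<^sup>2 / (4 * r) = - (norm y)\<^sup>2 / (4 * (r/q))"
      using q by simp
    ultimately show ?thesis by (simp add: algebra_simps)
  qed
  finally show ?thesis unfolding heat_kernel_def by simp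
qed

lemma ind_bound:
  fixes y :: "'a::euclidean_space"
  assumes L: "L > 0"
  shows "indicator (ball 0 L) y \<le> exp (1/4) * (4*pi*L\<^sup>2) powr (real DIM('a) / 2) * heat_kernel (L\<^sup>2) y"
proof (cases "y \<in> ball 0 L")
  case True
  then have "norm y < L" by simp
  then have "(norm y)\<^sup>2 \<le> L\<^sup>2" using L by (intro power_mono) auto
  then have "(norm y)\<^sup>2 / (4 * L\<^sup>2) \<le> 1/4" using L by (simp add: divide_simps)
  then have e: "exp (-1/4) \<le> exp (- (norm y)\<^sup>2 / (4 * L\<^sup>2))" by simp
  have "exp (1/4) * (4*pi*L\<^sup>2) powr (real DIM('a) / 2) * heat_kernel (L\<^sup>2) y
     = exp (1/4) * exp (- (norm y)\<^sup>2 / (4 * L\<^sup>2))"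
    unfolding heat_kernel_def using L by (simp add: powr_minus_divide)
  also have "\<dots> \<ge> exp (1/4) * exp (-1/4)" using e by simp
  finally show ?thesis using True by (simp add: exp_add[symmetric])
next
  case False
  then show ?thesis using L by (simp add: hk_nonneg)
qed



lemma lint_abs_le:
  fixes g h :: "'b \<Rightarrow> real"
  assumes h: "integrable M h" and gh: "\<And>x. x \<in> space M \<Longrightarrow> \<bar>g x\<bar> \<le> h x"
  shows "\<bar>LINT x|M. g x\<bar> \<le> LINT x|M. h x"
proof (cases "integrable M g")
  case True
  have "\<bar>LINT x|M. g x\<bar> \<le> LINT x|M. \<bar>g x\<bar>" by (rule integral_abs_bound)
  also have "\<dots> \<le> LINT x|M. h x"
    using True h gh by (intro integral_mono) auto
  finally show ?thesis .
next
  case False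
  then have "(LINT x|M. g x) = 0" by (simp add: not_integrable_integral_eq)
  moreover have "0 \<le> LINT x|M. h x"
    using gh by (intro integral_nonneg_AE) (auto intro: order_trans[OF abs_ge_zero])
  ultimately show ?thesis by simp
qed

lemma set_lint_abs_le:
  fixes g h :: "real \<Rightarrow> real"
  assumes h: "set_integrable lborel A h" and gh: "\<And>x. x \<in> A \<Longrightarrow> \<bar>g x\<bar> \<le> h x"
  shows "\<bar>(LINT x:A|lborel. g x)\<bar> \<le> (LINT x:A|lborel. h x)"
  unfolding set_lebesgue_integral_def
  apply (rule lint_abs_le)
  using h apply (simp add: set_integrable_def)
  using gh by (auto simp: indicator_def)

lemma set_FTC:
  fixes g F :: "real \<Rightarrow> real"
  assumes t: "0 \<le> t" and c: "continuous_on {0..t} g"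
    and d: "\<And>x. 0 \<le> x \<Longrightarrow> x \<le> t \<Longrightarrow> (F has_real_derivative g x) (at x within {0..t})"
  shows "set_integrable lborel {0<..<t} g" "(LINT s:{0<..<t}|lborel. g s) = F t - F 0"
proof -
  have "interval_lebesgue_integrable lborel 0 t g"
    using interval_integrable_continuous_on[OF t c] by (simp add: zero_ereal_def)
  then show "set_integrable lborel {0<..<t} g"
    using t by (simp add: interval_lebesgue_integrable_def zero_ereal_def)
  have "(LBINT x=ereal 0..ereal t. g x) = F t - F 0"
    apply (rule interval_integral_FTC_finite)
    using t c d by (auto simp: has_real_derivative_iff_has_vector_derivative[symmetric])
  then show "(LINT s:{0<..<t}|lborel. g s) = F t - F 0"
    using t by (simp add: interval_lebesgue_integral_le_eq)
qed

lemma phi_lip: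
  fixes a b q :: real
  assumes ab: "0 \<le> a" "a \<le> b" and q: "q \<ge> 1"
  shows "min b 1 powr q \<le> min a 1 powr q + q * (b - a)"
proof -
  define a' b' where "a' = min a 1" and "b' = min b 1"
  have h: "0 \<le> a'" "a' \<le> b'" "b' \<le> 1" "b' - a' \<le> b - a" using ab unfolding a'_def b'_def by auto
  have "b' powr q - a' powr q \<le> q * (b' - a')"
  proof (cases "a' = b'")
    case True then show ?thesis by simp
  next
    case ne: False
    show ?thesis
    proof (cases "a' = 0")
      case True
      then have "b' > 0" using h ne by auto
      then have "b' powr q \<le> b'" using h q by (intro powr_le_one_le) auto
      also have "b' \<le> q * b'" using q h by (simp add: mult_le_cancel_right1)
      finally show ?thesis using True by simp
    next
      case False
      then have a0: "a' > 0" using h by auto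
      have "a' < b'" using h ne by auto
      have der: "\<And>x. a' \<le> x \<Longrightarrow> x \<le> b' \<Longrightarrow> ((\<lambda>x. x powr q) has_real_derivative q * x powr (q-1)) (at x)"
        using a0 by (intro has_real_derivative_powr) auto
      obtain z where z: "z > a'" "z < b'" "b' powr q - a' powr q = (b' - a') * (q * z powr (q - 1))"
        using MVT2[OF \<open>a' < b'\<close> der] by blast
      have "z powr (q - 1) \<le> 1" using z h q a0 by (intro powr_le1) auto
      then have "(b' - a') * (q * z powr (q - 1)) \<le> (b' - a') * (q * 1)"
        using q h by (intro mult_left_mono) auto
      then show ?thesis using z by simp
    qed
  qed
  then have "b' powr q \<le> a' powr q + q * (b - a)"
    using h q by (smt (verit, best) mult_left_mono)
  then show ?thesis unfolding a'_def b'_def .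
qed

lemma f_bound:
  assumes M: "assumption_M f p"
  shows "\<exists>C0>0. \<forall>u. \<bar>f u\<bar> \<le> C0 * min \<bar>u\<bar> 1 powr p"
proof -
  from M have ls: "Limsup (at_right 0) (\<lambda>u. ereal (f u / u powr p)) < \<infinity>"
    and pos: "\<And>u. 0 < u \<and> u < 1 \<Longrightarrow> f u > 0"
    and z1: "\<And>u. u \<le> 0 \<Longrightarrow> f u = 0" and z2: "\<And>u. u \<ge> 1 \<Longrightarrow> f u = 0"
    and p: "p > 1"
    and loc: "\<forall>x. \<exists>U. open U \<and> x \<in> U \<and> (\<exists>K. K-lipschitz_on U f)"
    unfolding assumption_M_def by auto
  obtain n :: nat where n: "Limsup (at_right 0) (\<lambda>u. ereal (f u / u powr p)) < ereal (real n)"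
    using ls less_PInf_Ex_of_nat by auto
  have "eventually (\<lambda>u. ereal (f u / u powr p) < ereal (real n)) (at_right 0)"
    by (rule Limsup_lessD[OF n])
  then obtain \<delta> where d: "\<delta> > 0" "\<And>u. u > 0 \<Longrightarrow> u < \<delta> \<Longrightarrow> f u / u powr p < real n"
    unfolding eventually_at_right_field by auto
  define \<delta>' where "\<delta>' = min \<delta> 1"
  have d': "\<delta>' > 0" "\<delta>' \<le> 1" "\<delta>' \<le> \<delta>" using d unfolding \<delta>'_def by auto
  have cont: "continuous_on UNIV f"
  proof -
    have "isCont f x" for x
    proof -
      obtain U K where "open U" "x \<in> U" "K-lipschitz_on U f" using loc by blast
      then show ?thesis
        using lipschitz_on_continuous_on continuous_on_eq_continuous_at by blast
    qed
    then show ?thesis by (simp add: continuous_at_imp_continuous_on)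
  qed
  have "compact (f ` {\<delta>'..1})"
    by (rule compact_continuous_image) (auto intro: continuous_on_subset[OF cont])
  then obtain B2 where B2: "\<And>u. u \<in> {\<delta>'..1} \<Longrightarrow> \<bar>f u\<bar> \<le> B2"
    using compact_imp_bounded bounded_iff by (metis image_eqI real_norm_def)
  define C0 where "C0 = max 1 (max (real n) (B2 / \<delta>' powr p))"
  have C0: "C0 > 0" unfolding C0_def by simp
  have "\<bar>f u\<bar> \<le> C0 * min \<bar>u\<bar> 1 powr p" for u
  proof (cases "0 < u \<and> u < 1")
    case True
    have up: "u powr p > 0" using True by simp
    have m: "min \<bar>u\<bar> 1 = u" using True by simp
    show ?thesis
    proof (cases "u < \<delta>")
      case True
      have "f u / u powr p < real n" using d True \<open>0 < u \<and> u < 1\<close> by auto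
      then have "f u \<le> real n * u powr p" using up by (simp add: divide_simps)
      also have "\<dots> \<le> C0 * u powr p" using up unfolding C0_def
        by (intro mult_right_mono) auto
      finally show ?thesis using pos[OF \<open>0 < u \<and> u < 1\<close>] m by simp
    next
      case False
      then have uin: "u \<in> {\<delta>'..1}" using d' \<open>0 < u \<and> u < 1\<close> by auto
      have dp: "\<delta>' powr p > 0" using d' by simp
      have "\<delta>' powr p \<le> u powr p" using uin d' p by (intro powr_mono2) auto
      have "f u \<le> B2" using B2[OF uin] by simp
      also have "B2 = (B2 / \<delta>' powr p) * \<delta>' powr p" using dp by simp
      also have "\<dots> \<le> C0 * u powr p"
      proof -
        have b0: "B2 \<ge> 0" using B2[OF uin] by simp
        have "(B2 / \<delta>' powr p) * \<delta>' powr p \<le> (B2 / \<delta>' powr p) * u powr p"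
          using b0 dp \<open>\<delta>' powr p \<le> u powr p\<close> by (intro mult_left_mono) auto
        also have "\<dots> \<le> C0 * u powr p" unfolding C0_def using up by (intro mult_right_mono) auto
        finally show ?thesis .
      qed
      finally show ?thesis using pos[OF \<open>0 < u \<and> u < 1\<close>] m by simp
    qed
  next
    case False
    then have "u \<le> 0 \<or> u \<ge> 1" by linarith
    then have "f u = 0" using z1 z2 by blast
    then show ?thesis using C0 by simp
  qed
  then show ?thesis using C0 by blast
qed



lemma key_ineq:
  fixes C0 p \<beta> \<epsilon> L N lam :: real
  assumes C0: "C0 > 0" and p: "p > 1" and \<beta>: "\<beta> = N * (p - 1) / 2" "\<beta> > 1"
    and e: "\<epsilon> > 0" and L: "L > 0"
    and lam: "lam = 2 * exp (1/4) * \<epsilon> * (4*pi*L\<^sup>2) powr (N/2)"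
    and cond: "C0 * (2*exp(1/4)) powr (p-1) * \<epsilon> powr (p-1) * L\<^sup>2 \<le> (\<beta> - 1) / 2"
  shows "C0 * lam powr p * (4*pi) powr (-\<beta>) * (L\<^sup>2) powr (1-\<beta>) / (\<beta>-1) \<le> lam / 2"
proof -
  define E where "E = 2 * exp (1/4::real)"
  have E: "E > 0" unfolding E_def by simp
  have lam_pos: "lam > 0" using lam e L by simp
  have lam': "lam = E * \<epsilon> * (4*pi*L\<^sup>2) powr (N/2)" using lam unfolding E_def by simp
  have "lam powr p = lam * lam powr (p-1)"
  proof -
    have "lam powr p = lam powr (1 + (p-1))" by simp
    also have "\<dots> = lam * lam powr (p-1)" using lam_pos by (simp only: powr_add powr_one_gt_zero_iff) simp
    finally show ?thesis .
  qed
  also have "lam powr (p-1) = E powr (p-1) * \<epsilon> powr (p-1) * ((4*pi) powr \<beta> * (L\<^sup>2) powr \<beta>)"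
  proof -
    have "lam powr (p-1) = E powr (p-1) * \<epsilon> powr (p-1) * ((4*pi*L\<^sup>2) powr (N/2)) powr (p-1)"
      unfolding lam' using E e by (simp add: powr_mult)
    also have "((4*pi*L\<^sup>2) powr (N/2)) powr (p-1) = (4*pi*L\<^sup>2) powr \<beta>"
      by (simp add: powr_powr \<beta>)
    also have "\<dots> = (4*pi) powr \<beta> * (L\<^sup>2) powr \<beta>" by (simp add: powr_mult)
    finally show ?thesis .
  qed
  finally have lp: "lam powr p = lam * (E powr (p-1) * \<epsilon> powr (p-1) * ((4*pi) powr \<beta> * (L\<^sup>2) powr \<beta>))" .
  have 1: "(4*pi) powr \<beta> * (4*pi) powr (-\<beta>) = (1::real)" by (simp add: powr_add[symmetric])
  have 2: "(L\<^sup>2) powr \<beta> * (L\<^sup>2) powr (1-\<beta>) = L\<^sup>2" using L by (simp add: powr_add[symmetric])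
  have "C0 * lam powr p * (4*pi) powr (-\<beta>) * (L\<^sup>2) powr (1-\<beta>) / (\<beta>-1)
      = lam * (C0 * E powr (p-1) * \<epsilon> powr (p-1) * (((4*pi) powr \<beta> * (4*pi) powr (-\<beta>)) * ((L\<^sup>2) powr \<beta> * (L\<^sup>2) powr (1-\<beta>)))) / (\<beta>-1)"
    unfolding lp by (simp add: algebra_simps)
  also have "\<dots> = lam * (C0 * E powr (p-1) * \<epsilon> powr (p-1) * L\<^sup>2) / (\<beta>-1)"
    unfolding 1 2 by simp
  also have "\<dots> \<le> lam * ((\<beta> - 1) / 2) / (\<beta>-1)"
    using cond lam_pos \<beta> unfolding E_def by (intro divide_right_mono mult_left_mono) auto
  also have "\<dots> = lam / 2" using \<beta> by (simp add: field_simps)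
  finally show ?thesis .
qed

lemma phi_bound:
  fixes a d v q :: real
  assumes "0 \<le> a" "0 \<le> d" "0 \<le> v" "v \<le> a + d" "q \<ge> 1"
  shows "min v 1 powr q \<le> a powr q + q * d"
proof -
  define b where "b = max v a"
  have "min v 1 powr q \<le> min b 1 powr q"
    using assms unfolding b_def by (intro powr_mono2) auto
  also have "\<dots> \<le> min a 1 powr q + q * (b - a)"
    using assms unfolding b_def by (intro phi_lip) auto
  also have "min a 1 powr q \<le> a powr q"
    using assms by (intro powr_mono2) auto
  also have "q * (b - a) \<le> q * d"
    using assms unfolding b_def by (intro mult_left_mono) auto
  finally show ?thesis by simp
qed



lemma inner_bound:
  fixes u :: "real \<Rightarrow> 'a::euclidean_space \<Rightarrow> real" and x :: 'a
  assumes C0: "C0 > 0" and fb: "\<And>v. \<bar>f v\<bar> \<le> C0 * min \<bar>v\<bar> 1 powr p"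
    and p: "p > 1" and \<beta>: "\<beta> = real DIM('a) * (p - 1) / 2"
    and L: "L > 0" and lam0: "lam \<ge> 0" and c: "d \<ge> 0"
    and s: "0 < s" "s < t"
    and hyp: "\<And>y. \<bar>u s y\<bar> \<le> lam * heat_kernel (s + L\<^sup>2) y + d"
  shows "\<bar>LINT y|lborel. heat_kernel (t - s) (x - y) * f (u s y)\<bar>
     \<le> C0 * lam powr p * (4*pi) powr (-\<beta>) * heat_kernel (t + L\<^sup>2) x * (s + L\<^sup>2) powr (-\<beta>) + C0 * p * d"
proof -
  let ?N = "real DIM('a)"
  define r where "r = s + L\<^sup>2"
  have r: "r > 0" using s L unfolding r_def by (simp add: add_pos_nonneg)
  define k where "k = (4*pi*r) powr (- ?N * (p - 1) / 2) * p powr (- ?N / 2)"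
  have k0: "k \<ge> 0" unfolding k_def by simp
  have ts: "t - s > 0" using s by simp
  have rp: "r / p > 0" using r p by simp
  define \<sigma> where "\<sigma> = t - s + r / p"
  have hb: "has_bochner_integral lborel
     (\<lambda>y. C0 * (lam powr p * k) * (heat_kernel (t - s) (x - y) * heat_kernel (r/p) y) + C0 * p * d * heat_kernel (t - s) (x - y))
     (C0 * (lam powr p * k) * heat_kernel \<sigma> x + C0 * p * d * 1)"
    unfolding \<sigma>_def
    by (intro has_bochner_integral_add has_bochner_integral_mult_right hk_conv hk_total ts rp)
  have pw: "\<bar>heat_kernel (t - s) (x - y) * f (u s y)\<bar>
      \<le> C0 * (lam powr p * k) * (heat_kernel (t - s) (x - y) * heat_kernel (r/p) y) + C0 * p * d * heat_kernel (t - s) (x - y)" for y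
  proof -
    let ?w = "lam * heat_kernel r y"
    have w0: "?w \<ge> 0" using lam0 by (simp add: hk_nonneg)
    have "min \<bar>u s y\<bar> 1 powr p \<le> ?w powr p + p * d"
      using hyp[of y] w0 c p unfolding r_def by (intro phi_bound) auto
    also have "?w powr p = lam powr p * (k * heat_kernel (r/p) y)"
      using lam0 hk_nonneg[of r y] hk_pow[OF r, of p y] p unfolding k_def
      by (simp add: powr_mult)
    finally have m: "min \<bar>u s y\<bar> 1 powr p \<le> lam powr p * (k * heat_kernel (r/p) y) + p * d" .
    have "\<bar>heat_kernel (t - s) (x - y) * f (u s y)\<bar> = heat_kernel (t - s) (x - y) * \<bar>f (u s y)\<bar>"
      by (simp add: abs_mult hk_nonneg)
    also have "\<dots> \<le> heat_kernel (t - s) (x - y) * (C0 * (lam powr p * (k * heat_kernel (r/p) y) + p * d))"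
      using fb[of "u s y"] m C0 by (intro mult_left_mono hk_nonneg order_trans[OF _ mult_left_mono[OF m]]) auto
    finally show ?thesis by (simp add: algebra_simps)
  qed
  have "\<bar>LINT y|lborel. heat_kernel (t - s) (x - y) * f (u s y)\<bar>
      \<le> LINT y|lborel. C0 * (lam powr p * k) * (heat_kernel (t - s) (x - y) * heat_kernel (r/p) y) + C0 * p * d * heat_kernel (t - s) (x - y)"
    by (rule lint_abs_le[OF integrable.intros[OF hb] pw])
  also have "\<dots> = C0 * (lam powr p * k) * heat_kernel \<sigma> x + C0 * p * d"
    using hb has_bochner_integral_integral_eq by fastforce
  also have "C0 * (lam powr p * k) * heat_kernel \<sigma> x
      \<le> C0 * lam powr p * (4*pi) powr (-\<beta>) * heat_kernel (t + L\<^sup>2) x * (s + L\<^sup>2) powr (-\<beta>)"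
  proof -
    have "heat_kernel \<sigma> x \<le> p powr (?N / 2) * heat_kernel (t + L\<^sup>2) x"
    proof (rule hk_mono)
      show "0 < \<sigma>" unfolding \<sigma>_def using ts rp by simp
      have "r / p \<le> r" using r p by (simp add: divide_simps)
      then show "\<sigma> \<le> t + L\<^sup>2" unfolding \<sigma>_def r_def by simp
      have "t - s \<le> p * (t - s)" using ts p by simp
      moreover have "p * \<sigma> = p * (t - s) + r" unfolding \<sigma>_def using p by (simp add: field_simps)
      ultimately show "t + L\<^sup>2 \<le> p * \<sigma>" unfolding r_def by linarith
    qed (use p in simp)
    then have "k * heat_kernel \<sigma> x \<le> k * (p powr (?N / 2) * heat_kernel (t + L\<^sup>2) x)"
      using k0 by (intro mult_left_mono)
    also have "k * (p powr (?N / 2) * heat_kernel (t + L\<^sup>2) x) = (4*pi) powr (-\<beta>) * heat_kernel (t + L\<^sup>2) x * (s + L\<^sup>2) powr (-\<beta>)"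
    proof -
      have "p powr (- ?N / 2) * p powr (?N / 2) = 1" using p by (simp add: powr_add[symmetric])
      moreover have "(4*pi*r) powr (- ?N * (p - 1) / 2) = (4*pi) powr (-\<beta>) * (s + L\<^sup>2) powr (-\<beta>)"
        unfolding \<beta> r_def using r r_def by (simp add: powr_mult)
      ultimately show ?thesis unfolding k_def by (simp add: algebra_simps)
    qed
    finally have "k * heat_kernel \<sigma> x \<le> (4*pi) powr (-\<beta>) * heat_kernel (t + L\<^sup>2) x * (s + L\<^sup>2) powr (-\<beta>)" .
    then have "C0 * lam powr p * (k * heat_kernel \<sigma> x) \<le> C0 * lam powr p * ((4*pi) powr (-\<beta>) * heat_kernel (t + L\<^sup>2) x * (s + L\<^sup>2) powr (-\<beta>))"
      using C0 by (intro mult_left_mono) auto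
    then show ?thesis by (simp add: algebra_simps)
  qed
  finally show ?thesis by simp
qed



lemma div_aux: "(\<beta>::real) \<noteq> 1 \<Longrightarrow> a/(1-\<beta>) - b/(1-\<beta>) = (b - a)/(\<beta>-1)"
proof -
  have "(b - a)/(\<beta>-1) = (a - b)/(1 - \<beta>)" by (metis minus_diff_eq minus_divide_divide)
  then show ?thesis by (simp add: diff_divide_distrib)
qed

lemma F_deriv:
  assumes "s + \<tau> > 0" "\<beta> > (1::real)"
  shows "((\<lambda>s. A2 * ((s + \<tau>) powr (1 - \<beta>) / (1 - \<beta>)) + B * (s ^ Suc n / real (Suc n))) has_real_derivative
     (A2 * (s + \<tau>) powr (-\<beta>) + B * s ^ n)) (at s within X)"
proof -
  have d1: "((\<lambda>s. (s + \<tau>) powr (1 - \<beta>::real)) has_real_derivative (1 - \<beta>) * (s + \<tau>) powr (1 - \<beta> - 1)) (at s within X)"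
    using assms by (auto intro!: derivative_eq_intros)
  have d2: "((\<lambda>s. s ^ Suc n) has_real_derivative real (Suc n) * s ^ n) (at s within X)"
    using DERIV_pow[of "Suc n" s X] by simp
  have "((\<lambda>s. A2 * ((s + \<tau>) powr (1 - \<beta>) / (1 - \<beta>)) + B * (s ^ Suc n / real (Suc n))) has_real_derivative
     (A2 * ((1 - \<beta>) * (s + \<tau>) powr (1 - \<beta> - 1) / (1 - \<beta>)) + B * (real (Suc n) * s ^ n / real (Suc n)))) (at s within X)"
    by (intro DERIV_add DERIV_cmult DERIV_cdivide d1 d2)
  moreover have "A2 * ((1 - \<beta>) * (s + \<tau>) powr (1 - \<beta> - 1) / (1 - \<beta>)) + B * (real (Suc n) * s ^ n / real (Suc n))
     = A2 * (s + \<tau>) powr (-\<beta>) + B * s ^ n"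
    using assms by simp
  ultimately show ?thesis by (simp only:)
qed

lemma step:
  fixes u :: "real \<Rightarrow> 'a::euclidean_space \<Rightarrow> real" and x :: 'a
  assumes C0: "C0 > 0" and fb: "\<And>v. \<bar>f v\<bar> \<le> C0 * min \<bar>v\<bar> 1 powr p"
    and p: "p > 1" and \<beta>: "\<beta> = real DIM('a) * (p - 1) / 2" "\<beta> > 1"
    and e: "\<epsilon> > 0" and L: "L > 0"
    and lam: "lam = 2 * exp (1/4) * \<epsilon> * (4*pi*L\<^sup>2) powr (real DIM('a)/2)"
    and cond: "C0 * (2*exp(1/4)) powr (p-1) * \<epsilon> powr (p-1) * L\<^sup>2 \<le> (\<beta> - 1) / 2"
    and t: "t > 0"
    and eq: "u t x = (LINT y|lborel. heat_kernel t (x - y) * (\<epsilon> * indicator (ball 0 L) y))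
       + (LINT s:{0<..<t}|lborel. (LINT y|lborel. heat_kernel (t - s) (x - y) * f (u s y)))"
    and c: "c \<ge> 0"
    and hyp: "\<And>s y. 0 < s \<Longrightarrow> s < t \<Longrightarrow> \<bar>u s y\<bar> \<le> lam * heat_kernel (s + L\<^sup>2) y + c * s ^ n"
  shows "\<bar>u t x\<bar> \<le> lam * heat_kernel (t + L\<^sup>2) x + C0 * p * c * t ^ Suc n / real (Suc n)"
proof -
  let ?N = "real DIM('a)"
  define \<tau> where "\<tau> = L\<^sup>2"
  have \<tau>: "\<tau> > 0" using L unfolding \<tau>_def by simp
  define G where "G = heat_kernel (t + \<tau>) x"
  have G0: "G \<ge> 0" unfolding G_def by (simp add: hk_nonneg)
  define A1 where "A1 = exp (1/4) * (4*pi*L\<^sup>2) powr (?N / 2)"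
  have lamA: "lam = 2 * (\<epsilon> * A1)" unfolding lam A1_def by simp
  have lam0: "lam \<ge> 0" using lam e by simp
  have conv1: "has_bochner_integral lborel (\<lambda>y. heat_kernel t (x - y) * heat_kernel \<tau> y) G"
    unfolding G_def by (rule hk_conv[OF t \<tau>])
  have I1: "\<bar>LINT y|lborel. heat_kernel t (x - y) * (\<epsilon> * indicator (ball 0 L) y)\<bar> \<le> \<epsilon> * A1 * G"
  proof -
    have hb: "has_bochner_integral lborel (\<lambda>y. \<epsilon> * A1 * (heat_kernel t (x - y) * heat_kernel \<tau> y)) (\<epsilon> * A1 * G)"
      by (intro has_bochner_integral_mult_right conv1)
    have pw: "\<bar>heat_kernel t (x - y) * (\<epsilon> * indicator (ball 0 L) y)\<bar> \<le> \<epsilon> * A1 * (heat_kernel t (x - y) * heat_kernel \<tau> y)" for y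
    proof -
      have "indicator (ball 0 L) y \<le> A1 * heat_kernel \<tau> y"
        using ind_bound[OF L, of y] unfolding A1_def \<tau>_def by simp
      then have "heat_kernel t (x - y) * (\<epsilon> * indicator (ball 0 L) y) \<le> heat_kernel t (x - y) * (\<epsilon> * (A1 * heat_kernel \<tau> y))"
        using e by (intro mult_left_mono hk_nonneg) (auto simp: hk_nonneg)
      moreover have "0 \<le> heat_kernel t (x - y) * (\<epsilon> * indicator (ball 0 L) y)"
        using e by (simp add: hk_nonneg)
      ultimately show ?thesis by (simp add: algebra_simps)
    qed
    show ?thesis
      using lint_abs_le[OF integrable.intros[OF hb] pw] hb has_bochner_integral_integral_eq by fastforce
  qed
  define A2 where "A2 = C0 * lam powr p * (4*pi) powr (-\<beta>) * G"
  have A2: "A2 \<ge> 0" unfolding A2_def using C0 G0 by simp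
  define B where "B = C0 * p * c"
  have B: "B \<ge> 0" unfolding B_def using C0 p c by simp
  define H where "H s = A2 * (s + \<tau>) powr (-\<beta>) + B * s ^ n" for s
  define F where "F s = A2 * ((s + \<tau>) powr (1 - \<beta>) / (1 - \<beta>)) + B * (s ^ Suc n / real (Suc n))" for s
  have inner: "\<bar>LINT y|lborel. heat_kernel (t - s) (x - y) * f (u s y)\<bar> \<le> H s" if s: "s \<in> {0<..<t}" for s
  proof -
    have "\<bar>LINT y|lborel. heat_kernel (t - s) (x - y) * f (u s y)\<bar>
     \<le> C0 * lam powr p * (4*pi) powr (-\<beta>) * heat_kernel (t + L\<^sup>2) x * (s + L\<^sup>2) powr (-\<beta>) + C0 * p * (c * s ^ n)"
      apply (rule inner_bound[OF C0 fb p \<beta>(1) L lam0])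
      using c s hyp by auto
    then show ?thesis unfolding H_def A2_def B_def G_def \<tau>_def by (simp add: algebra_simps)
  qed
  have Hc: "continuous_on {0..t} H"
    unfolding H_def using \<tau> by (intro continuous_intros) auto
  have Hd: "(F has_real_derivative H s) (at s within {0..t})" if "0 \<le> s" "s \<le> t" for s
  proof -
    have sp: "s + \<tau> > 0" using that \<tau> by simp
    show ?thesis
      unfolding F_def[abs_def] H_def using F_deriv[OF sp] \<beta> by blast
  qed
  note ftc = set_FTC[OF less_imp_le[OF t] Hc Hd]
  have I2: "\<bar>LINT s:{0<..<t}|lborel. (LINT y|lborel. heat_kernel (t - s) (x - y) * f (u s y))\<bar> \<le> F t - F 0"
    using set_lint_abs_le[OF ftc(1) inner] ftc(2) by simp
  have F_bound: "F t - F 0 \<le> A2 * (\<tau> powr (1 - \<beta>) / (\<beta> - 1)) + B * (t ^ Suc n / real (Suc n))"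
  proof -
    have "(t + \<tau>) powr (1 - \<beta>) / (1 - \<beta>) - \<tau> powr (1 - \<beta>) / (1 - \<beta>)
        = (\<tau> powr (1 - \<beta>) - (t + \<tau>) powr (1 - \<beta>)) / (\<beta> - 1)"
      using \<beta> by (intro div_aux) simp
    also have "\<dots> \<le> \<tau> powr (1 - \<beta>) / (\<beta> - 1)"
      using \<beta> by (intro divide_right_mono) auto
    finally have "A2 * ((t + \<tau>) powr (1 - \<beta>) / (1 - \<beta>) - \<tau> powr (1 - \<beta>) / (1 - \<beta>)) \<le> A2 * (\<tau> powr (1 - \<beta>) / (\<beta> - 1))"
      using A2 by (intro mult_left_mono) auto
    then show ?thesis unfolding F_def by (simp add: algebra_simps)
  qed
  have key: "C0 * lam powr p * (4*pi) powr (-\<beta>) * (L\<^sup>2) powr (1-\<beta>) / (\<beta>-1) \<le> lam / 2"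
    by (rule key_ineq[OF C0 p \<beta> e L lam cond])
  have "A2 * (\<tau> powr (1 - \<beta>) / (\<beta> - 1)) = (C0 * lam powr p * (4*pi) powr (-\<beta>) * (L\<^sup>2) powr (1-\<beta>) / (\<beta>-1)) * G"
    unfolding A2_def \<tau>_def by simp
  also have "\<dots> \<le> lam / 2 * G" using key G0 by (intro mult_right_mono) auto
  finally have A2b: "A2 * (\<tau> powr (1 - \<beta>) / (\<beta> - 1)) \<le> lam / 2 * G" .
  have "\<bar>u t x\<bar> \<le> \<epsilon> * A1 * G + (F t - F 0)"
    using I1 I2 eq by linarith
  also have "\<dots> \<le> \<epsilon> * A1 * G + lam / 2 * G + B * (t ^ Suc n / real (Suc n))"
    using F_bound A2b by linarith
  also have "\<dots> = lam * heat_kernel (t + L\<^sup>2) x + C0 * p * c * t ^ Suc n / real (Suc n)"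
    unfolding lamA G_def \<tau>_def B_def by (simp add: algebra_simps)
  finally show ?thesis .
qed



theorem theorem6p2:
  fixes f :: "real \<Rightarrow> real" and p :: real
  assumes "assumption_M f p"
    and "p > 1 + 2 / real DIM('a::euclidean_space)"
  shows "\<exists>Cm>0. \<forall>\<epsilon> L (u :: real \<Rightarrow> 'a \<Rightarrow> real).
           0 < \<epsilon> \<and> \<epsilon> \<le> 1 \<and> 0 < L \<and> L < Cm * \<epsilon> powr (- (p - 1) / 2) \<and>
           mild_solution f (\<lambda>x. \<epsilon> * indicator (ball 0 L) x) u \<longrightarrow>
           (\<exists>K T. \<forall>t\<ge>T. \<forall>x. \<bar>u t x\<bar> \<le> K * t powr (- real DIM('a) / 2))"
proof -
  let ?N = "real DIM('a)"
  obtain C0 where C0: "C0 > 0" and fb: "\<And>v. \<bar>f v\<bar> \<le> C0 * min \<bar>v\<bar> 1 powr p"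
    using f_bound[OF assms(1)] by blast
  have p: "p > 1" using assms(1) unfolding assumption_M_def by simp
  define \<beta> where "\<beta> = ?N * (p - 1) / 2"
  have Npos: "?N > 0" by simp
  have "?N * (p - 1) > ?N * (2 / ?N)"
    using assms(2) Npos by (intro mult_strict_left_mono) auto
  then have \<beta>1: "\<beta> > 1" unfolding \<beta>_def using Npos by simp
  define E where "E = 2 * exp (1/4::real)"
  have Epos: "E powr (p - 1) > 0" unfolding E_def by simp
  define D where "D = (\<beta> - 1) / (2 * C0 * E powr (p - 1))"
  have Dpos: "D > 0" unfolding D_def using \<beta>1 C0 Epos by simp
  have CD: "C0 * E powr (p - 1) * D = (\<beta> - 1) / 2"
    unfolding D_def using C0 Epos by (simp add: field_simps)
  show ?thesis
  proof (rule exI[of _ "sqrt D"], intro conjI allI impI)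
    show "sqrt D > 0" using Dpos by simp
    fix \<epsilon> L and u :: "real \<Rightarrow> 'a \<Rightarrow> real"
    assume H: "0 < \<epsilon> \<and> \<epsilon> \<le> 1 \<and> 0 < L \<and> L < sqrt D * \<epsilon> powr (- (p - 1) / 2) \<and>
           mild_solution f (\<lambda>x. \<epsilon> * indicator (ball 0 L) x) u"
    then have e: "\<epsilon> > 0" and L: "L > 0" and Lb: "L < sqrt D * \<epsilon> powr (- (p - 1) / 2)"
      and ms: "mild_solution f (\<lambda>x. \<epsilon> * indicator (ball 0 L) x) u" by auto
    have "L\<^sup>2 < (sqrt D * \<epsilon> powr (- (p - 1) / 2))\<^sup>2"
      using L Lb by (intro power_strict_mono) auto
    also have "\<dots> = D * \<epsilon> powr (- (p - 1))"
    proof -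
      have a: "\<epsilon> powr (- (p - 1) / 2) * \<epsilon> powr (- (p - 1) / 2) = \<epsilon> powr (- (p - 1))"
        by (simp add: powr_add[symmetric])
      have b: "sqrt D * sqrt D = D" using Dpos by simp
      show ?thesis unfolding power2_eq_square
        by (metis a b mult.assoc mult.left_commute)
    qed
    finally have L2: "L\<^sup>2 < D * \<epsilon> powr (- (p - 1))" .
    have "\<epsilon> powr (p - 1) * L\<^sup>2 \<le> \<epsilon> powr (p - 1) * (D * \<epsilon> powr (- (p - 1)))"
      using L2 e by (intro mult_left_mono) auto
    also have "\<dots> = D" using e by (simp add: powr_add[symmetric])
    finally have eL: "\<epsilon> powr (p - 1) * L\<^sup>2 \<le> D" .
    have cond: "C0 * (2*exp(1/4)) powr (p-1) * \<epsilon> powr (p-1) * L\<^sup>2 \<le> (\<beta> - 1) / 2"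
    proof -
      have "C0 * E powr (p-1) * (\<epsilon> powr (p-1) * L\<^sup>2) \<le> C0 * E powr (p-1) * D"
        using eL C0 Epos by (intro mult_left_mono) auto
      then show ?thesis using CD unfolding E_def by (simp add: mult.assoc)
    qed
    define lam where "lam = 2 * exp (1/4) * \<epsilon> * (4*pi*L\<^sup>2) powr (?N/2)"
    have lam0: "lam \<ge> 0" unfolding lam_def using e by simp
    from ms have bd: "\<forall>T>0. \<exists>M. \<forall>t\<in>{0<..T}. \<forall>x. \<bar>u t x\<bar> \<le> M"
      and eqs: "\<And>t x. t > 0 \<Longrightarrow> u t x = (LINT y|lborel. heat_kernel t (x - y) * (\<epsilon> * indicator (ball 0 L) y))
       + (LINT s:{0<..<t}|lborel. (LINT y|lborel. heat_kernel (t - s) (x - y) * f (u s y)))"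
      unfolding mild_solution_def by auto
    have main: "\<bar>u t x\<bar> \<le> lam * heat_kernel (t + L\<^sup>2) x" if t: "t > 0" for t x
    proof -
      obtain M where M: "\<And>s y. s \<in> {0<..t} \<Longrightarrow> \<bar>u s y\<bar> \<le> M" using bd t by blast
      have M0: "M \<ge> 0" using M[of t x] t by auto
      have ind: "\<bar>u s y\<bar> \<le> lam * heat_kernel (s + L\<^sup>2) y + M * (C0 * p) ^ n * s ^ n / fact n"
        if "s \<in> {0<..t}" for n s y
        using that
      proof (induction n arbitrary: s y)
        case 0
        then show ?case using M[of s y] lam0 hk_nonneg[of "s + L\<^sup>2" y]
          by (simp add: add_increasing)
      next
        case (Suc n)
        define c where "c = M * (C0 * p) ^ n / fact n"
        have c: "c \<ge> 0" unfolding c_def using M0 C0 p by simp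
        have "\<bar>u s y\<bar> \<le> lam * heat_kernel (s + L\<^sup>2) y + C0 * p * c * s ^ Suc n / real (Suc n)"
        proof (rule step[OF C0 fb p \<beta>_def \<beta>1 e L lam_def cond])
          show "s > 0" using Suc.prems by simp
          show "u s y = (LINT y'|lborel. heat_kernel s (y - y') * (\<epsilon> * indicator (ball 0 L) y'))
             + (LINT s':{0<..<s}|lborel. (LINT y'|lborel. heat_kernel (s - s') (y - y') * f (u s' y')))"
            using eqs Suc.prems by simp
          show "c \<ge> 0" by (rule c)
          fix s' y'
          assume "0 < s'" "s' < s"
          then have "s' \<in> {0<..t}" using Suc.prems by auto
          from Suc.IH[OF this, of y'] show "\<bar>u s' y'\<bar> \<le> lam * heat_kernel (s' + L\<^sup>2) y' + c * s' ^ n"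
            unfolding c_def by (simp add: algebra_simps)
        qed
        also have "C0 * p * c * s ^ Suc n / real (Suc n) = M * (C0 * p) ^ Suc n * s ^ Suc n / fact (Suc n)"
          unfolding c_def by (simp add: field_simps)
        finally show ?case .
      qed
      have lim: "(\<lambda>n. lam * heat_kernel (t + L\<^sup>2) x + M * (inverse (fact n) * (C0 * p * t) ^ n)) \<longlonglongrightarrow>
          lam * heat_kernel (t + L\<^sup>2) x + M * 0"
        by (intro tendsto_intros summable_LIMSEQ_zero[OF summable_exp])
      show ?thesis
      proof (rule LIMSEQ_le_const[OF lim[simplified]])
        show "\<exists>N. \<forall>n\<ge>N. \<bar>u t x\<bar> \<le> lam * heat_kernel (t + L\<^sup>2) x + M * (inverse (fact n) * (C0 * p * t) ^ n)"
          using ind[of t] t by (auto simp: power_mult_distrib field_simps)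
      qed
    qed
    have fin: "\<bar>u t x\<bar> \<le> (lam * (4*pi) powr (- ?N / 2)) * t powr (- ?N / 2)" if t1: "1 \<le> t" for t x
    proof -
      from t1 have t: "t > 0" by simp
      have "\<bar>u t x\<bar> \<le> lam * heat_kernel (t + L\<^sup>2) x" by (rule main[OF t])
      also have "\<dots> \<le> lam * (4*pi*(t + L\<^sup>2)) powr (- ?N / 2)"
        using t L lam0 by (intro mult_left_mono hk_le) (auto simp: add_pos_nonneg)
      also have "(4*pi*(t + L\<^sup>2)) powr (- ?N / 2) \<le> (4*pi*t) powr (- ?N / 2)"
        using t L by (intro powr_mono2') auto
      also have "(4*pi*t) powr (- ?N / 2) = (4*pi) powr (- ?N / 2) * t powr (- ?N / 2)"
        using t by (simp add: powr_mult)
      finally show "\<bar>u t x\<bar> \<le> (lam * (4*pi) powr (- ?N / 2)) * t powr (- ?N / 2)"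
        using lam0 by (simp add: mult_left_mono mult.assoc)
    qed
    then show "\<exists>K T. \<forall>t\<ge>T. \<forall>x. \<bar>u t x\<bar> \<le> K * t powr (- ?N / 2)" by blast
  qed
qed

end
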